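(* Let $\mathcal P$ be a pre-Hahn-localizable family of probability measures on $(\Omega,\mathcal F)$ with a localization $\mathcal Q$ whose supports are pairwise disjoint, and let $\mathcal H_{\mathcal F}^{\mathcal Q}$ be its Hahn-extension. For $\mu\in\mathrm{ca}(\mathcal P)$ and $P\in\mathcal P$ we have $\mu\ll P$ if and only if $\mu^{\mathcal Q}\ll P^{\mathcal Q}$.
   Context: $\mathrm{ca}(\mathcal P)$ is the set of finite signed measures $\mu$ on $\mathcal F$ with $|\mu|\ll P$ for some $P\in\mathcal P$; for signed $\mu$, $\mu\ll P$ means $|\mu|\ll P$. $\mathcal A\lll\mathcal B$ means every $A\in\mathcal A$ is absolutely continuous w.r.t. some $B\in\mathcal B$; $\mathrm{sconv}$ denotes countable convex combinations. $\mathcal P$ is pre-Hahn-localizable with localization $\mathcal Q$ and supports $S_Q\in\mathcal F$ if $Q(S_R)=\delta_{QR}$ for $Q,R\in\mathcal Q$ and $\mathcal Q\lll\mathcal P\lll\mathrm{sconv}(\mathcal Q)$. Hahn-extension: $\mathcal H_{\mathcal F}^{\mathcal Q}=\sigma\big(\mathcal F\cup\{\bigcup_{Q}E_Q:E_Q\in\mathcal F,E_Q\subseteq S_Q\}\big)$. For $\mu\in\mathrm{ca}(\mathcal P)$, $\mathcal Q(\mu)=\{Q:|\mu|(S_Q)>0\}$ (countable) and $\mu^{\mathcal Q}(A)=\sum_{Q\in\mathcal Q(\mu)}\mu(A\cap S_Q)$ for $A\in\mathcal H_{\mathcal F}^{\mathcal Q}$, a finite signed measure extending $\mu$. *)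

theory Defs
  imports "HOL-Probability.Probability"
begin

definition signed_measure_on :: "'a set set \<Rightarrow> ('a set \<Rightarrow> real) \<Rightarrow> bool" where
  "signed_measure_on Sig mu \<longleftrightarrow> mu {} = 0 \<and>
     (\<forall>A :: nat \<Rightarrow> 'a set. range A \<subseteq> Sig \<longrightarrow> disjoint_family A \<longrightarrow>
        (\<lambda>i. mu (A i)) sums mu (\<Union>i. A i))"

definition tvar :: "'a set set \<Rightarrow> ('a set \<Rightarrow> real) \<Rightarrow> 'a set \<Rightarrow> ereal" where
  "tvar Sig mu A = (SUP D \<in> {D. finite D \<and> D \<subseteq> Sig \<and> disjoint D \<and> \<Union>D = A}.
                       ereal (\<Sum>B\<in>D. \<bar>mu B\<bar>))"

definition sabs_cont :: "'a set set \<Rightarrow> ('a set \<Rightarrow> real) \<Rightarrow> ('a set \<Rightarrow> real) \<Rightarrow> bool" where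
  "sabs_cont Sig mu nu \<longleftrightarrow> (\<forall>A\<in>Sig. nu A = 0 \<longrightarrow> tvar Sig mu A = 0)"

definition ca :: "'a measure \<Rightarrow> 'a measure set \<Rightarrow> ('a set \<Rightarrow> real) set" where
  "ca M Ps = {mu. signed_measure_on (sets M) mu \<and> (\<exists>P\<in>Ps. sabs_cont (sets M) mu (measure P))}"

text \<open>A <<< B: every A in As is absolutely continuous w.r.t. some B in Bs
  (absolutely_continuous B A means null_sets B \<subseteq> null_sets A, i.e. A << B).\<close>
definition lll :: "'a measure set \<Rightarrow> 'a measure set \<Rightarrow> bool" where
  "lll As Bs \<longleftrightarrow> (\<forall>A\<in>As. \<exists>B\<in>Bs. absolutely_continuous B A)"

definition sconv :: "'a measure \<Rightarrow> 'a measure set \<Rightarrow> 'a measure set" where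
  "sconv M Qs = {R. sets R = sets M \<and>
     (\<exists>(q :: nat \<Rightarrow> 'a measure) (w :: nat \<Rightarrow> real). range q \<subseteq> Qs \<and> (\<forall>n. 0 \<le> w n) \<and> w sums 1 \<and>
        (\<forall>A\<in>sets M. emeasure R A = (\<Sum>n. ennreal (w n) * emeasure (q n) A)))}"

definition pre_hahn_localizable ::
    "'a measure \<Rightarrow> 'a measure set \<Rightarrow> 'a measure set \<Rightarrow> ('a measure \<Rightarrow> 'a set) \<Rightarrow> bool" where
  "pre_hahn_localizable M Ps Qs S \<longleftrightarrow>
     (\<forall>Q\<in>Qs. prob_space Q \<and> sets Q = sets M \<and> S Q \<in> sets M) \<and>
     (\<forall>Q\<in>Qs. \<forall>R\<in>Qs. measure Q (S R) = (if Q = R then 1 else 0)) \<and>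
     lll Qs Ps \<and> lll Ps (sconv M Qs)"

definition hahn_ext :: "'a measure \<Rightarrow> 'a measure set \<Rightarrow> ('a measure \<Rightarrow> 'a set) \<Rightarrow> 'a set set" where
  "hahn_ext M Qs S = sigma_sets (space M)
     (sets M \<union> {(\<Union>Q\<in>Qs. E Q) | E. \<forall>Q\<in>Qs. E Q \<in> sets M \<and> E Q \<subseteq> S Q})"

definition Qof :: "'a measure \<Rightarrow> 'a measure set \<Rightarrow> ('a measure \<Rightarrow> 'a set) \<Rightarrow> ('a set \<Rightarrow> real) \<Rightarrow> 'a measure set" where
  "Qof M Qs S mu = {Q\<in>Qs. tvar (sets M) mu (S Q) > 0}"

definition loc_ext :: "'a measure \<Rightarrow> 'a measure set \<Rightarrow> ('a measure \<Rightarrow> 'a set) \<Rightarrow> ('a set \<Rightarrow> real) \<Rightarrow> 'a set \<Rightarrow> real" where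
  "loc_ext M Qs S mu A = infsum (\<lambda>Q. mu (A \<inter> S Q)) (Qof M Qs S mu)"

end

theory Submission
  imports Defs
begin

lemma tvar_ge:
  assumes "A \<in> Sig" "B \<in> Sig" "B \<subseteq> A" "A - B \<in> Sig"
  shows "ereal \<bar>f B\<bar> \<le> tvar Sig f A"
proof -
  let ?D = "{B, A - B}"
  have "?D \<in> {D. finite D \<and> D \<subseteq> Sig \<and> disjoint D \<and> \<Union>D = A}"
    using assms by (auto simp: disjoint_def)
  hence "ereal (\<Sum>X\<in>?D. \<bar>f X\<bar>) \<le> tvar Sig f A" unfolding tvar_def by (rule SUP_upper)
  moreover have "\<bar>f B\<bar> \<le> (\<Sum>X\<in>?D. \<bar>f X\<bar>)" by (cases "B = A - B") auto
  ultimately show ?thesis by (meson ereal_less_eq(3) order_trans)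
qed

lemma tvar_zero_imp:
  assumes "tvar Sig f A \<le> 0" "A \<in> Sig" "B \<in> Sig" "B \<subseteq> A" "A - B \<in> Sig"
  shows "f B = 0"
proof -
  have "ereal \<bar>f B\<bar> \<le> 0" using tvar_ge[OF assms(2-5), of f] assms(1) by (rule order_trans)
  thus ?thesis by simp
qed

lemma tvar_eq0:
  assumes "A \<in> Sig" "\<And>D B. D \<subseteq> Sig \<Longrightarrow> \<Union>D = A \<Longrightarrow> B \<in> D \<Longrightarrow> f B = 0"
  shows "tvar Sig f A = 0"
proof -
  let ?I = "{D. finite D \<and> D \<subseteq> Sig \<and> disjoint D \<and> \<Union>D = A}"
  have ne: "{A} \<in> ?I" using assms(1) by (auto simp: disjoint_def)
  have "tvar Sig f A = (SUP D\<in>?I. (0::ereal))"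
    unfolding tvar_def
  proof (rule SUP_cong)
    fix D assume "D \<in> ?I"
    then show "ereal (\<Sum>B\<in>D. \<bar>f B\<bar>) = 0" using assms(2)[of D] by auto
  qed simp
  also have "\<dots> = 0"
  proof (rule SUP_const)
    show "?I \<noteq> {}" using ne by blast
  qed
  finally show ?thesis .
qed

lemma hahn_int:
  assumes ph: "pre_hahn_localizable M Ps Qs S"
    and dj: "\<forall>Q\<in>Qs. \<forall>R\<in>Qs. Q \<noteq> R \<longrightarrow> S Q \<inter> S R = {}"
    and X: "X \<in> hahn_ext M Qs S" and Q: "Q \<in> Qs"
  shows "X \<inter> S Q \<in> sets M"
proof -
  have SQ: "S Q \<in> sets M" using ph Q by (auto simp: pre_hahn_localizable_def)
  from X show ?thesis unfolding hahn_ext_def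
  proof (induction rule: sigma_sets.induct)
    case (Basic a)
    then show ?case
    proof
      assume "a \<in> sets M" then show ?thesis using SQ by auto
    next
      assume "a \<in> {(\<Union>Q\<in>Qs. E Q) | E. \<forall>Q\<in>Qs. E Q \<in> sets M \<and> E Q \<subseteq> S Q}"
      then obtain E where a: "a = (\<Union>Q\<in>Qs. E Q)" and E: "\<forall>Q\<in>Qs. E Q \<in> sets M \<and> E Q \<subseteq> S Q"
        by blast
      have "a \<inter> S Q = E Q"
      proof
        show "E Q \<subseteq> a \<inter> S Q" using a E Q by blast
        show "a \<inter> S Q \<subseteq> E Q"
        proof
          fix x assume "x \<in> a \<inter> S Q"
          then obtain R where R: "R \<in> Qs" "x \<in> E R" "x \<in> S Q" using a by blast
          then have "x \<in> S R" using E by blast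
          then have "R = Q" using R dj Q by blast
          then show "x \<in> E Q" using R by simp
        qed
      qed
      then show ?thesis using E Q by auto
    qed
  next
    case Empty then show ?case by simp
  next
    case (Compl a)
    have "(space M - a) \<inter> S Q = S Q - (a \<inter> S Q)" using sets.sets_into_space[OF SQ] by blast
    then show ?case using Compl SQ by auto
  next
    case (Union a)
    have "(\<Union>i. a i) \<inter> S Q = (\<Union>i. a i \<inter> S Q)" by blast
    moreover have "(\<Union>i. a i \<inter> S Q) \<in> sets M" using Union.IH by (intro sets.countable_nat_UN) auto
    ultimately show ?case by simp
  qed
qed

lemma sm_add:
  assumes "signed_measure_on Sig mu" "X \<in> Sig" "Y \<in> Sig" "X \<inter> Y = {}" "{} \<in> Sig"
  shows "mu (X \<union> Y) = mu X + mu Y"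
proof -
  have "(\<lambda>n. mu (binaryset X Y n)) sums (mu X + mu Y)"
    using assms(1) by (intro binaryset_sums) (simp add: signed_measure_on_def)
  moreover have "(\<lambda>n. mu (binaryset X Y n)) sums mu (\<Union>n. binaryset X Y n)"
  proof -
    have r: "range (binaryset X Y) \<subseteq> Sig" using assms by (simp add: range_binaryset_eq)
    have d: "disjoint_family (binaryset X Y)" using assms(4)
      by (auto simp: disjoint_family_on_def binaryset_def)
    show ?thesis using assms(1) r d unfolding signed_measure_on_def by blast
  qed
  ultimately show ?thesis by (simp add: UN_binaryset_eq sums_unique2)
qed

theorem lemma4p4:
  fixes M :: "'a measure" and Ps Qs :: "'a measure set" and S :: "'a measure \<Rightarrow> 'a set"
    and mu :: "'a set \<Rightarrow> real" and P :: "'a measure"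
  assumes "\<forall>P'\<in>Ps. prob_space P' \<and> sets P' = sets M"
    and "pre_hahn_localizable M Ps Qs S"
    and "\<forall>Q\<in>Qs. \<forall>R\<in>Qs. Q \<noteq> R \<longrightarrow> S Q \<inter> S R = {}"
    and "mu \<in> ca M Ps"
    and "P \<in> Ps"
  shows "sabs_cont (sets M) mu (measure P) \<longleftrightarrow>
         sabs_cont (hahn_ext M Qs S) (loc_ext M Qs S mu) (loc_ext M Qs S (measure P))"
proof -
  note ph = assms(2)
  note dj = assms(3)
  have QsP: "\<And>Q. Q \<in> Qs \<Longrightarrow> prob_space Q \<and> sets Q = sets M \<and> S Q \<in> sets M"
    using ph by (auto simp: pre_hahn_localizable_def)
  have meas: "\<And>Q. Q \<in> Qs \<Longrightarrow> measure Q (S Q) = 1"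
    using ph by (auto simp: pre_hahn_localizable_def)
  have lPs: "lll Ps (sconv M Qs)" using ph by (auto simp: pre_hahn_localizable_def)
  have FH: "\<And>X. X \<in> sets M \<Longrightarrow> X \<in> hahn_ext M Qs S"
    by (auto simp: hahn_ext_def intro: sigma_sets.Basic)
  have Pp: "prob_space P" and Ps: "sets P = sets M" using assms(1,5) by auto
  have smu: "signed_measure_on (sets M) mu" using assms(4) by (auto simp: ca_def)
  have mu0: "mu {} = 0" using smu by (simp add: signed_measure_on_def)
  obtain P' where P': "P' \<in> Ps" "sabs_cont (sets M) mu (measure P')"
    using assms(4) by (auto simp: ca_def)

  have P_zero: "measure P (A \<inter> S Q) = 0"
    if A: "A \<in> hahn_ext M Qs S" and A0: "loc_ext M Qs S (measure P) A = 0" and Q: "Q \<in> Qs" for A Q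
  proof (cases "Q \<in> Qof M Qs S (measure P)")
    case False
    then have "tvar (sets M) (measure P) (S Q) \<le> 0" using Q by (auto simp: Qof_def not_less)
    moreover have "S Q - A \<inter> S Q \<in> sets M" using hahn_int[OF ph dj A Q] QsP[OF Q] by auto
    ultimately show ?thesis using tvar_zero_imp hahn_int[OF ph dj A Q] QsP[OF Q] by blast
  next
    case True
    define g where "g = (\<lambda>R. measure P (A \<inter> S R))"
    have sub: "Qof M Qs S (measure P) \<subseteq> Qs" by (auto simp: Qof_def)
    have "g summable_on Qof M Qs S (measure P)"
    proof (rule nonneg_bdd_above_summable_on)
      show "\<And>x. x \<in> Qof M Qs S (measure P) \<Longrightarrow> 0 \<le> g x" by (simp add: g_def)
      show "bdd_above (sum g ` {F. F \<subseteq> Qof M Qs S (measure P) \<and> finite F})"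
      proof (rule bdd_aboveI[where M=1])
        fix x assume "x \<in> sum g ` {F. F \<subseteq> Qof M Qs S (measure P) \<and> finite F}"
        then obtain F where F: "F \<subseteq> Qs" "finite F" and x: "x = sum g F" using sub by blast
        have "measure P (\<Union>R\<in>F. A \<inter> S R) = (\<Sum>R\<in>F. measure P (A \<inter> S R))"
        proof (rule measure_finite_Union)
          show "finite F" by fact
          show "(\<lambda>R. A \<inter> S R) ` F \<subseteq> sets P" using hahn_int[OF ph dj A] F Ps by auto
          show "disjoint_family_on (\<lambda>R. A \<inter> S R) F" using dj F
            by (auto simp: disjoint_family_on_def)
          show "\<And>i. emeasure P (A \<inter> S i) \<noteq> \<infinity>" using Pp
            by (simp add: finite_measure.emeasure_finite prob_space.finite_measure)
        qed
        moreover have "measure P (\<Union>R\<in>F. A \<inter> S R) \<le> 1" using Pp by (simp add: prob_space.prob_le_1)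
        ultimately show "x \<le> 1" using x by (simp add: g_def)
      qed
    qed
    then have "sum g {Q} \<le> infsum g (Qof M Qs S (measure P))"
      by (rule finite_sum_le_infsum) (use True in \<open>auto simp: g_def\<close>)
    then have "g Q \<le> 0" using A0 by (simp add: loc_ext_def g_def)
    then show ?thesis by (simp add: g_def measure_nonneg antisym)
  qed

  show ?thesis
  proof
    assume L: "sabs_cont (sets M) mu (measure P)"
    show "sabs_cont (hahn_ext M Qs S) (loc_ext M Qs S mu) (loc_ext M Qs S (measure P))"
      unfolding sabs_cont_def
    proof (intro ballI impI)
      fix A assume A: "A \<in> hahn_ext M Qs S" and A0: "loc_ext M Qs S (measure P) A = 0"
      show "tvar (hahn_ext M Qs S) (loc_ext M Qs S mu) A = 0"
      proof (rule tvar_eq0[OF A])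
        fix D B assume D: "D \<subseteq> hahn_ext M Qs S" "\<Union>D = A" "B \<in> D"
        then have B: "B \<in> hahn_ext M Qs S" "B \<subseteq> A" by auto
        show "loc_ext M Qs S mu B = 0" unfolding loc_ext_def
        proof (rule infsum_0)
          fix R assume "R \<in> Qof M Qs S mu"
          then have R: "R \<in> Qs" by (simp add: Qof_def)
          have AR: "A \<inter> S R \<in> sets M" using hahn_int[OF ph dj A R] .
          have BR: "B \<inter> S R \<in> sets M" using hahn_int[OF ph dj B(1) R] .
          have "tvar (sets M) mu (A \<inter> S R) = 0" using L AR P_zero[OF A A0 R]
            by (simp add: sabs_cont_def)
          then show "mu (B \<inter> S R) = 0"
            using tvar_zero_imp[of "sets M" mu "A \<inter> S R" "B \<inter> S R"] AR BR B by auto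
        qed
      qed
    qed
  next
    assume R: "sabs_cont (hahn_ext M Qs S) (loc_ext M Qs S mu) (loc_ext M Qs S (measure P))"
    show "sabs_cont (sets M) mu (measure P)"
      unfolding sabs_cont_def
    proof (intro ballI impI)
      fix A assume A: "A \<in> sets M" and A0: "measure P A = 0"
      have "loc_ext M Qs S (measure P) A = 0" unfolding loc_ext_def
      proof (rule infsum_0)
        fix Q assume "Q \<in> Qof M Qs S (measure P)"
        then have Q: "Q \<in> Qs" by (simp add: Qof_def)
        have "measure P (A \<inter> S Q) \<le> measure P A"
          using finite_measure.finite_measure_mono[OF prob_space.finite_measure[OF Pp], of "A \<inter> S Q" A] A Ps
          by auto
        then show "measure P (A \<inter> S Q) = 0" using A0 by (simp add: measure_nonneg antisym)
      qed
      then have tH: "tvar (hahn_ext M Qs S) (loc_ext M Qs S mu) A = 0"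
        using R FH[OF A] by (simp add: sabs_cont_def)
      have key: "mu (B \<inter> S Q) = 0" if B: "B \<in> sets M" "B \<subseteq> A" and Q: "Q \<in> Qs" for B Q
      proof (cases "Q \<in> Qof M Qs S mu")
        case True
        have BQ: "B \<inter> S Q \<in> sets M" using B QsP[OF Q] by auto
        have "loc_ext M Qs S mu (B \<inter> S Q) = 0"
          using tvar_zero_imp[of "hahn_ext M Qs S" "loc_ext M Qs S mu" A "B \<inter> S Q"] tH
            FH[OF A] FH[OF BQ] FH[of "A - B \<inter> S Q"] A BQ B by auto
        moreover have "loc_ext M Qs S mu (B \<inter> S Q) = infsum (\<lambda>_. mu (B \<inter> S Q)) {Q}"
          unfolding loc_ext_def
        proof (rule infsum_cong_neutral)
          fix x assume "x \<in> Qof M Qs S mu - {Q}"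
          then have "x \<in> Qs" "x \<noteq> Q" by (auto simp: Qof_def)
          then have "B \<inter> S Q \<inter> S x = {}" using dj Q by blast
          then show "mu (B \<inter> S Q \<inter> S x) = 0" using mu0 by simp
        qed (use True in auto)
        ultimately show ?thesis by simp
      next
        case False
        then have "tvar (sets M) mu (S Q) \<le> 0" using Q by (auto simp: Qof_def not_less)
        then show ?thesis using tvar_zero_imp[of "sets M" mu "S Q" "B \<inter> S Q"] B QsP[OF Q] by auto
      qed
      have muB: "mu B = 0" if B: "B \<in> sets M" "B \<subseteq> A" for B
      proof -
        obtain Rm where Rm: "Rm \<in> sconv M Qs" "absolutely_continuous Rm P'"
          using lPs P'(1) by (auto simp: lll_def)
        then obtain q w where Rms: "sets Rm = sets M" and q: "range q \<subseteq> Qs"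
          and eR: "\<forall>X\<in>sets M. emeasure Rm X = (\<Sum>n. ennreal (w n) * emeasure (q n) X)"
          by (auto simp: sconv_def)
        define U where "U = (\<Union>n. S (q n))"
        have U: "U \<in> sets M" using q QsP unfolding U_def by (intro sets.countable_nat_UN) auto
        have BU: "B - U \<in> sets M" using U B by auto
        have q0: "emeasure (q n) (B - U) = 0" for n
        proof -
          have qn: "q n \<in> Qs" using q by auto
          have pqs: "prob_space (q n)" using QsP[OF qn] by blast
          have fq: "finite_measure (q n)" using pqs by (rule prob_space.finite_measure)
          have sp: "space (q n) = space M" using QsP[OF qn] sets_eq_imp_space_eq by blast
          have SS: "S (q n) \<in> sets (q n)" using QsP[OF qn] by simp
          have CS: "space (q n) - S (q n) \<in> sets (q n)" using SS by blast
          have "measure (q n) (space (q n) - S (q n)) = measure (q n) (space (q n)) - measure (q n) (S (q n))"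
            by (rule finite_measure.finite_measure_Diff[OF fq sets.top[of "q n"] SS sets.sets_into_space[OF SS]])
          also have "\<dots> = 0" using meas[OF qn] prob_space.prob_space[OF pqs] by simp
          finally have c0: "measure (q n) (space (q n) - S (q n)) = 0" .
          have "B - U \<subseteq> space (q n) - S (q n)" using sets.sets_into_space[OF BU] sp unfolding U_def by blast
          then have "measure (q n) (B - U) \<le> measure (q n) (space (q n) - S (q n))"
            using CS by (rule finite_measure.finite_measure_mono[OF fq])
          then have "measure (q n) (B - U) = 0" using c0 by (simp add: measure_nonneg antisym)
          then show ?thesis by (simp add: finite_measure.emeasure_eq_measure[OF fq])
        qed
        have "emeasure Rm (B - U) = 0" using eR BU q0 by simp
        then have "B - U \<in> null_sets Rm" using BU Rms by (auto intro: null_setsI)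
        then have "B - U \<in> null_sets P'" using Rm(2) by (auto simp: absolutely_continuous_def)
        then have "measure P' (B - U) = 0" by (simp add: measure_def null_sets_def)
        then have "tvar (sets M) mu (B - U) = 0" using P'(2) BU by (simp add: sabs_cont_def)
        then have m1: "mu (B - U) = 0" using tvar_zero_imp[of "sets M" mu "B - U" "B - U"] BU by auto
        define C where "C = (\<lambda>n. B \<inter> disjointed (\<lambda>n. S (q n)) n)"
        have dr: "range (disjointed (\<lambda>n. S (q n))) \<subseteq> sets M"
          using q QsP by (intro sets.range_disjointed_sets) auto
        have Cs: "range C \<subseteq> sets M" using dr B unfolding C_def by auto
        have Cd: "disjoint_family C" using disjoint_family_disjointed[of "\<lambda>n. S (q n)"]
          unfolding C_def disjoint_family_on_def by blast
        have CU: "(\<Union>n. C n) = B \<inter> U" unfolding C_def U_def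
          using UN_disjointed_eq[of "\<lambda>n. S (q n)"] by blast
        have C0: "mu (C n) = 0" for n
        proof -
          have "C n \<subseteq> S (q n)" using disjointed_subset[of "\<lambda>n. S (q n)" n] unfolding C_def by blast
          then have "C n = C n \<inter> S (q n)" by blast
          moreover have "C n \<in> sets M" "C n \<subseteq> A" using Cs B unfolding C_def by auto
          ultimately show ?thesis using key[of "C n" "q n"] q by (metis range_subsetD)
        qed
        have "(\<lambda>n. mu (C n)) sums mu (B \<inter> U)" using smu Cs Cd CU
          unfolding signed_measure_on_def by metis
        then have m2: "mu (B \<inter> U) = 0" using C0 by (simp add: sums_zero sums_unique2)
        have "mu ((B \<inter> U) \<union> (B - U)) = mu (B \<inter> U) + mu (B - U)"
          by (rule sm_add[OF smu]) (use B U BU in auto)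
        moreover have "(B \<inter> U) \<union> (B - U) = B" by blast
        ultimately show ?thesis using m1 m2 by simp
      qed
      show "tvar (sets M) mu A = 0"
      proof (rule tvar_eq0[OF A])
        fix D B assume "D \<subseteq> sets M" "\<Union>D = A" "B \<in> D"
        then show "mu B = 0" using muB by blast
      qed
    qed
  qed
qed

end
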